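(* Let $\phi\in C^3((0,\infty))$, $\eta=\phi'$ and $\hat\eta(r)=\eta(r)+2\eta(2r)$, and suppose there are constants $0<a_0<\tilde r_1<\tilde r_2<2a_0$ and $a_1>a_0$ such that: $\eta'(r)>0$ for $0<r<\tilde r_1$ and $\eta'(r)<0$ for $r>\tilde r_1$; $\eta''(r)<0$ for $0<r<\tilde r_2$ and $\eta''(r)>0$ for $r>\tilde r_2$; $\hat\eta(r)<0$ for $0<r<a_0$ and $\hat\eta(r)>0$ for $r>a_0$; $\hat\eta'(r)>0$ for $0<r<a_1$ and $\hat\eta'(r)<0$ for $r>a_1$. Let $N,K$ be integers with $K\ge2$ and $K<N-1$. For $\mathbf r=(r_{-N},\dots,r_N)\in(0,\infty)^{2N+1}$ define: (i) $F^{QCF}_j(\mathbf r)$, $j=-N,\dots,N+1$: $F^{QCF}_{-N}=\eta(r_{-N})+2\eta(2r_{-N})$; $F^{QCF}_j=[\eta(r_j)+2\eta(2r_j)]-[\eta(r_{j-1})+2\eta(2r_{j-1})]$ for $-N+1\le j\le -K$ and $K+1\le j\le N$; $F^{QCF}_j=[\eta(r_j)+\eta(r_j+r_{j+1})]-[\eta(r_{j-1})+\eta(r_{j-1}+r_{j-2})]$ for $-K+1\le j\le K$; $F^{QCF}_{N+1}=-[\eta(r_N)+2\eta(2r_N)]$. (ii) $\psi^E_j(\mathbf r)$, $j=-N-1,\dots,N+1$: $\psi^E_{-N-1}=\psi^E_{N+1}=0$; $\psi^E_j=\eta(r_j)+2\eta(2r_j)$ for $-N\le j\le -K-2$ and $K+2\le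 j\le N$; $\psi^E_{-K-1}=\eta(r_{-K-1})+2\eta(2r_{-K-1})+\tfrac12\eta(r_{-K-1}+r_{-K})$; $\psi^E_{-K}=\eta(r_{-K})+\tfrac12\eta(r_{-K}+r_{-K-1})+\tfrac12\eta(r_{-K}+r_{-K+1})+\eta(2r_{-K})$; $\psi^E_{-K+1}=\eta(r_{-K+1})+\tfrac12\eta(r_{-K+1}+r_{-K})+\eta(r_{-K+1}+r_{-K+2})$; $\psi^E_j=\eta(r_j)+\eta(r_j+r_{j-1})+\eta(r_j+r_{j+1})$ for $-K+2\le j\le K-2$; $\psi^E_{K-1}=\eta(r_{K-1})+\eta(r_{K-1}+r_{K-2})+\tfrac12\eta(r_{K-1}+r_K)$; $\psi^E_K=\eta(r_K)+\tfrac12\eta(r_K+r_{K-1})+\tfrac12\eta(r_K+r_{K+1})+\eta(2r_K)$; $\psi^E_{K+1}=\eta(r_{K+1})+2\eta(2r_{K+1})+\tfrac12\eta(r_{K+1}+r_K)$. (iii) $F^{QCE}_j(\mathbf r)=\psi^E_j(\mathbf r)-\psi^E_{j-1}(\mathbf r)$ and $F^G_j(\mathbf r)=F^{QCF}_j(\mathbf r)-F^{QCE}_j(\mathbf r)$ for $j=-N,\dots,N+1$. Let $f_{-N},\dots,f_{N+1}\in\mathbb R$ be anti-symmetric, i.e. $f_{j+1}=-f_{-j}$ for $j=0,\dots,N$, and set $\Phi_j=-\sum_{i=-N}^{j}f_i$ for $j=-N,\dots,N$. Suppose $r_L,r_U$ satisfy $\tilde r_2/2<r_L<r_U$ and $\eta'(r_U)+13\eta'(2r_L)>0$,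 and $\eta(r_L)+4\eta(2r_L)-2\eta(2r_U)<\Phi_j<\eta(r_U)+4\eta(2r_U)-2\eta(2r_L)$ for $j=-N,\dots,N$. Then for every symmetric $\mathbf r^n\in\Omega=(r_L,r_U)^{2N+1}$ there is a unique symmetric $\mathbf r^{n+1}\in\Omega$ such that $F^{QCE}_j(\mathbf r^{n+1})+F^G_j(\mathbf r^n)+f_j=0$ for $j=-N,\dots,N+1$. The induced mapping $\mathbf r^n\mapsto\mathbf r^{n+1}$ is a contraction satisfying, for symmetric $\mathbf r^n,\mathbf s^n\in\Omega$ with images $\mathbf r^{n+1},\mathbf s^{n+1}$, $\|\mathbf r^{n+1}-\mathbf s^{n+1}\|_\infty\le\frac{8|\eta'(2r_L)|}{\eta'(r_U)-5|\eta'(2r_L)|}\|\mathbf r^n-\mathbf s^n\|_\infty$, where $\frac{8|\eta'(2r_L)|}{\eta'(r_U)-5|\eta'(2r_L)|}<1$; and the iterates $\mathbf r^n$ converge to the unique symmetric $\mathbf r\in\Omega$ satisfying the force-based quasicontinuum equations $F^{QCF}_j(\mathbf r)+f_j=0$, $j=-N,\dots,N+1$.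
   Context: A vector $\mathbf r$ is symmetric if $r_{-j}=r_j$ for $j=1,\dots,N$; $\|\mathbf r\|_\infty=\max_i|r_i|$. $F^{QCF}$, $F^{QCE}$ and $F^G$ are the force-based quasicontinuum forces, energy-based quasicontinuum forces and ghost-force corrections on the representative atoms of a one-dimensional chain with nearest and next-nearest neighbour pair interactions given by $\phi$, expressed in the lattice spacings $r_j$; $f_j$ are external forces. *)

theory Defs
  imports Complex_Main
begin

text \<open>Lattice vectors r = (r_{-N},...,r_N) are represented as functions int => real;
  only the values at indices -N..N matter.\<close>

definition eta_hat :: "(real \<Rightarrow> real) \<Rightarrow> real \<Rightarrow> real" where
  "eta_hat eta r = eta r + 2 * eta (2 * r)"

definition FQCF :: "(real \<Rightarrow> real) \<Rightarrow> int \<Rightarrow> int \<Rightarrow> (int \<Rightarrow> real) \<Rightarrow> int \<Rightarrow> real" where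
  "FQCF eta N K r j =
    (if j = -N then eta_hat eta (r (-N))
     else if (-N+1 \<le> j \<and> j \<le> -K) \<or> (K+1 \<le> j \<and> j \<le> N) then
       eta_hat eta (r j) - eta_hat eta (r (j-1))
     else if -K+1 \<le> j \<and> j \<le> K then
       (eta (r j) + eta (r j + r (j+1))) - (eta (r (j-1)) + eta (r (j-1) + r (j-2)))
     else if j = N+1 then - eta_hat eta (r N)
     else 0)"

definition psiE :: "(real \<Rightarrow> real) \<Rightarrow> int \<Rightarrow> int \<Rightarrow> (int \<Rightarrow> real) \<Rightarrow> int \<Rightarrow> real" where
  "psiE eta N K r j =
    (if j = -N-1 \<or> j = N+1 then 0
     else if (-N \<le> j \<and> j \<le> -K-2) \<or> (K+2 \<le> j \<and> j \<le> N) then eta (r j) + 2 * eta (2 * r j)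
     else if j = -K-1 then
       eta (r (-K-1)) + 2 * eta (2 * r (-K-1)) + 1/2 * eta (r (-K-1) + r (-K))
     else if j = -K then
       eta (r (-K)) + 1/2 * eta (r (-K) + r (-K-1)) + 1/2 * eta (r (-K) + r (-K+1)) + eta (2 * r (-K))
     else if j = -K+1 then
       eta (r (-K+1)) + 1/2 * eta (r (-K+1) + r (-K)) + eta (r (-K+1) + r (-K+2))
     else if -K+2 \<le> j \<and> j \<le> K-2 then
       eta (r j) + eta (r j + r (j-1)) + eta (r j + r (j+1))
     else if j = K-1 then
       eta (r (K-1)) + eta (r (K-1) + r (K-2)) + 1/2 * eta (r (K-1) + r K)
     else if j = K then
       eta (r K) + 1/2 * eta (r K + r (K-1)) + 1/2 * eta (r K + r (K+1)) + eta (2 * r K)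
     else if j = K+1 then
       eta (r (K+1)) + 2 * eta (2 * r (K+1)) + 1/2 * eta (r (K+1) + r K)
     else 0)"

definition FQCE :: "(real \<Rightarrow> real) \<Rightarrow> int \<Rightarrow> int \<Rightarrow> (int \<Rightarrow> real) \<Rightarrow> int \<Rightarrow> real" where
  "FQCE eta N K r j = psiE eta N K r j - psiE eta N K r (j-1)"

definition FG :: "(real \<Rightarrow> real) \<Rightarrow> int \<Rightarrow> int \<Rightarrow> (int \<Rightarrow> real) \<Rightarrow> int \<Rightarrow> real" where
  "FG eta N K r j = FQCF eta N K r j - FQCE eta N K r j"

definition symmetric_vec :: "int \<Rightarrow> (int \<Rightarrow> real) \<Rightarrow> bool" where
  "symmetric_vec N r \<longleftrightarrow> (\<forall>j\<in>{1..N}. r (-j) = r j)"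

definition in_Omega :: "real \<Rightarrow> real \<Rightarrow> int \<Rightarrow> (int \<Rightarrow> real) \<Rightarrow> bool" where
  "in_Omega rL rU N r \<longleftrightarrow> (\<forall>j\<in>{-N..N}. rL < r j \<and> r j < rU)"

definition sup_dist :: "int \<Rightarrow> (int \<Rightarrow> real) \<Rightarrow> (int \<Rightarrow> real) \<Rightarrow> real" where
  "sup_dist N r s = Max ((\<lambda>j. \<bar>r j - s j\<bar>) ` {-N..N})"

definition gfc_step :: "(real \<Rightarrow> real) \<Rightarrow> int \<Rightarrow> int \<Rightarrow> (int \<Rightarrow> real) \<Rightarrow> (int \<Rightarrow> real) \<Rightarrow> (int \<Rightarrow> real) \<Rightarrow> bool" where
  "gfc_step eta N K f r r' \<longleftrightarrow>
     (\<forall>j\<in>{-N..N+1}. FQCE eta N K r' j + FG eta N K r j + f j = 0)"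

definition qcf_eq :: "(real \<Rightarrow> real) \<Rightarrow> int \<Rightarrow> int \<Rightarrow> (int \<Rightarrow> real) \<Rightarrow> (int \<Rightarrow> real) \<Rightarrow> bool" where
  "qcf_eq eta N K f r \<longleftrightarrow> (\<forall>j\<in>{-N..N+1}. FQCF eta N K r j + f j = 0)"

end

theory Submission
  imports Defs
begin


lemma sd_ge: "j \<in> {-N..N} \<Longrightarrow> \<bar>x j - y j\<bar> \<le> sup_dist N x y"
  unfolding sup_dist_def by (rule Max_ge) auto

lemma sd_le: "-N \<le> N \<Longrightarrow> (\<And>j. j \<in> {-N..N} \<Longrightarrow> \<bar>x j - y j\<bar> \<le> B) \<Longrightarrow> sup_dist N x y \<le> B"
  unfolding sup_dist_def by (subst Max_le_iff) auto

lemma sd_attain: "-N \<le> N \<Longrightarrow> \<exists>k\<in>{-N..N}. \<bar>x k - y k\<bar> = sup_dist N x y"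
proof -
  assume "-N \<le> N"
  then have "sup_dist N x y \<in> (\<lambda>j. \<bar>x j - y j\<bar>) ` {-N..N}"
    unfolding sup_dist_def by (intro Max_in) auto
  then show ?thesis by force
qed

lemma sd_nonneg: "-N \<le> N \<Longrightarrow> 0 \<le> sup_dist N x y"
  using sd_ge[of N N x y] by force

lemma sd_sum: "-N \<le> N \<Longrightarrow> sup_dist N x y \<le> (\<Sum>i\<in>{-N..N}. \<bar>x i - y i\<bar>)"
  by (rule sd_le) (auto intro: member_le_sum)

lemma sd_cong: "(\<And>j. j \<in> {-N..N} \<Longrightarrow> x j = x' j) \<Longrightarrow> (\<And>j. j \<in> {-N..N} \<Longrightarrow> y j = y' j)
  \<Longrightarrow> sup_dist N x y = sup_dist N x' y'"
  unfolding sup_dist_def by (rule arg_cong[where f=Max]) auto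

locale qc =
  fixes eta :: "real \<Rightarrow> real" and rL rU m a :: real and N K :: int
  assumes K2: "2 \<le> K" and KN: "K < N - 1"
    and rL0: "0 < rL" and rLU: "rL < rU" and a0: "0 < a" and ma: "13 * a < m"
    and E1: "\<And>y y'. rL \<le> y \<Longrightarrow> y \<le> y' \<Longrightarrow> y' \<le> rU \<Longrightarrow> m * (y' - y) \<le> eta y' - eta y"
    and E2: "\<And>s t. 2 * rL \<le> s \<Longrightarrow> s \<le> t \<Longrightarrow> t \<le> 2 * rU \<Longrightarrow>
               - (a * (t - s)) \<le> eta t - eta s \<and> eta t - eta s \<le> 0"
    and cont: "\<And>x. 0 < x \<Longrightarrow> isCont eta x"
begin

definition al :: "int \<Rightarrow> real" where
  "al j = (if \<bar>j\<bar> \<ge> K + 1 then 2 else if \<bar>j\<bar> = K then 1 else 0)"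
definition be :: "int \<Rightarrow> real" where
  "be j = (if j \<le> -K-1 \<or> j \<ge> K+2 then 0 else if j = -K \<or> j = -K+1 \<or> j = K \<or> j = K+1 then 1/2 else 1)"
definition ga :: "int \<Rightarrow> real" where
  "ga j = be (-j)"
definition la1 :: "int \<Rightarrow> real" where
  "la1 j = (if \<bar>j\<bar> \<ge> K + 2 then 0 else if \<bar>j\<bar> = K \<or> \<bar>j\<bar> = K + 1 then 1/2 else 1)"
definition la2 :: "int \<Rightarrow> real" where
  "la2 j = (if \<bar>j\<bar> \<ge> K + 1 then 0 else if \<bar>j\<bar> = K \<or> \<bar>j\<bar> = K - 1 then 1/2 else 1)"
definition la3 :: "int \<Rightarrow> real" where
  "la3 j = (if \<bar>j\<bar> \<ge> K + 1 then 0 else if \<bar>j\<bar> = K then 1 else 2)"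

definition nbl :: "int \<Rightarrow> int" where "nbl j = max (j - 1) (-N)"
definition nbr :: "int \<Rightarrow> int" where "nbr j = min (j + 1) N"

definition row :: "int \<Rightarrow> real \<Rightarrow> real \<Rightarrow> real \<Rightarrow> real" where
  "row j p q y = eta y + al j * eta (2 * y) + be j * eta (y + p) + ga j * eta (y + q)"

lemma coef:
  assumes "-N \<le> j" "j \<le> N"
  shows "0 \<le> al j \<and> 0 \<le> be j \<and> 0 \<le> ga j \<and> al j + be j + ga j \<le> 5/2
     \<and> 0 \<le> la1 j \<and> 0 \<le> la2 j \<and> 0 \<le> la3 j
     \<and> 4 - (al j + be j + ga j) - la3 j = 2 - la1 j - la2 j \<and> la1 j + la2 j \<le> 2
     \<and> la1 j + la2 j + la3 j \<le> 4"
  using K2 KN assms unfolding al_def be_def ga_def la1_def la2_def la3_def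
  by (auto simp: abs_if)

lemma coef_sym: "al (-j) = al j" "be (-j) = ga j" "ga (-j) = be j"
  "la1 (-j) = la1 j" "la2 (-j) = la2 j" "la3 (-j) = la3 j"
  unfolding al_def be_def ga_def la1_def la2_def la3_def by auto

lemma be_edge: "be (-N) = 0" "ga N = 0"
  using K2 KN unfolding be_def ga_def by auto

lemma form:
  assumes "-N \<le> j" "j \<le> N"
  shows "psiE eta N K x j = row j (x (nbl j)) (x (nbr j)) (x j)"
proof -
  consider "j \<le> -K-2" | "j = -K-1" | "j = -K" | "j = -K+1" | "-K+2 \<le> j \<and> j \<le> K-2"
    | "j = K-1" | "j = K" | "j = K+1" | "j \<ge> K+2" by linarith
  then show ?thesis
  proof cases
    case 1 then show ?thesis using assms K2 KN
      by (simp add: psiE_def row_def al_def be_def ga_def abs_if)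
  next
    case 2 then show ?thesis using assms K2 KN
      by (simp add: psiE_def row_def al_def be_def ga_def abs_if nbl_def nbr_def)
  next
    case 3 then show ?thesis using assms K2 KN
      by (simp add: psiE_def row_def al_def be_def ga_def abs_if nbl_def nbr_def algebra_simps)
  next
    case 4 then have j: "j = 1 - K" by simp
    show ?thesis using assms K2 KN unfolding j
      by (simp add: psiE_def row_def al_def be_def ga_def abs_if nbl_def nbr_def algebra_simps)
  next
    case 5 then show ?thesis using assms K2 KN
      by (simp add: psiE_def row_def al_def be_def ga_def abs_if nbl_def nbr_def algebra_simps)
  next
    case 6 then have j: "j = K - 1" by simp
    show ?thesis using assms K2 KN unfolding j
      by (simp add: psiE_def row_def al_def be_def ga_def abs_if nbl_def nbr_def algebra_simps)
  next
    case 7 then show ?thesis using assms K2 KN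
      by (simp add: psiE_def row_def al_def be_def ga_def abs_if nbl_def nbr_def algebra_simps)
  next
    case 8 then show ?thesis using assms K2 KN
      by (simp add: psiE_def row_def al_def be_def ga_def abs_if nbl_def nbr_def algebra_simps)
  next
    case 9 then show ?thesis using assms K2 KN
      by (simp add: psiE_def row_def al_def be_def ga_def abs_if)
  qed
qed

lemma E2abs:
  assumes "2 * rL \<le> s" "s \<le> 2 * rU" "2 * rL \<le> t" "t \<le> 2 * rU"
  shows "\<bar>eta t - eta s\<bar> \<le> a * \<bar>t - s\<bar>"
proof (cases "s \<le> t")
  case True
  from E2[OF assms(1) True assms(4)] True show ?thesis by (simp add: abs_if)
next
  case False
  from E2[OF assms(3) _ assms(2)] False show ?thesis by (simp add: abs_if)
qed

lemma E2mono: "2 * rL \<le> s \<Longrightarrow> s \<le> t \<Longrightarrow> t \<le> 2 * rU \<Longrightarrow> eta t \<le> eta s"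
  using E2 by fastforce

lemma row_mono:
  assumes j: "-N \<le> j" "j \<le> N" and p: "rL \<le> p" "p \<le> rU" and q: "rL \<le> q" "q \<le> rU"
    and y: "rL \<le> y" "y \<le> y'" "y' \<le> rU"
  shows "(m - 5 * a) * (y' - y) + (be j + ga j) * a * (y' - y) \<le> row j p q y' - row j p q y"
proof -
  define d where "d = y' - y"
  have d0: "0 \<le> d" using y by (simp add: d_def)
  have c: "0 \<le> al j" "0 \<le> be j" "0 \<le> ga j" "al j + be j + ga j \<le> 5/2" using coef[OF j] by auto
  have h0: "m * d \<le> eta y' - eta y" using E1[OF y] by (simp add: d_def)
  have h1: "- (a * (2 * d)) \<le> eta (2*y') - eta (2*y)" using E2[of "2*y" "2*y'"] y rLU
    by (simp add: d_def algebra_simps)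
  have h2: "- (a * d) \<le> eta (y'+p) - eta (y+p)" using E2[of "y+p" "y'+p"] y p
    by (simp add: d_def algebra_simps)
  have h3: "- (a * d) \<le> eta (y'+q) - eta (y+q)" using E2[of "y+q" "y'+q"] y q
    by (simp add: d_def algebra_simps)
  have g1: "al j * (- (a * (2 * d))) \<le> al j * (eta (2*y') - eta (2*y))" using mult_left_mono[OF h1 c(1)] .
  have g2: "be j * (- (a * d)) \<le> be j * (eta (y'+p) - eta (y+p))" using mult_left_mono[OF h2 c(2)] .
  have g3: "ga j * (- (a * d)) \<le> ga j * (eta (y'+q) - eta (y+q))" using mult_left_mono[OF h3 c(3)] .
  have ad: "0 \<le> a * d" using a0 d0 by simp
  have g4: "(al j + be j + ga j) * (a * d) \<le> 5/2 * (a * d)" using mult_right_mono[OF c(4) ad] .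
  have "row j p q y' - row j p q y = (eta y' - eta y) + al j * (eta (2*y') - eta (2*y))
     + be j * (eta (y'+p) - eta (y+p)) + ga j * (eta (y'+q) - eta (y+q))"
    by (simp add: row_def algebra_simps)
  moreover have "(m - 5 * a) * (y' - y) + (be j + ga j) * a * (y' - y)
     \<le> m * d + al j * (- (a * (2 * d))) + be j * (- (a * d)) + ga j * (- (a * d))"
    using g4 by (simp add: d_def[symmetric] algebra_simps)
  ultimately show ?thesis using h0 g1 g2 g3 by linarith
qed

lemma row_lip:
  assumes j: "-N \<le> j" "j \<le> N" and y: "rL \<le> y" "y \<le> rU"
    and p: "rL \<le> p" "p \<le> rU" "rL \<le> p'" "p' \<le> rU" and q: "rL \<le> q" "q \<le> rU" "rL \<le> q'" "q' \<le> rU"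
    and S: "\<bar>p - p'\<bar> \<le> S" "\<bar>q - q'\<bar> \<le> S"
  shows "\<bar>row j p q y - row j p' q' y\<bar> \<le> (be j + ga j) * a * S"
proof -
  have c: "0 \<le> be j" "0 \<le> ga j" using coef[OF j] by auto
  have h2: "\<bar>eta (y+p) - eta (y+p')\<bar> \<le> a * S"
    using E2abs[of "y+p'" "y+p"] y p S a0 order_trans[OF _ mult_left_mono[OF S(1)]] by auto
  have h3: "\<bar>eta (y+q) - eta (y+q')\<bar> \<le> a * S"
    using E2abs[of "y+q'" "y+q"] y q S a0 order_trans[OF _ mult_left_mono[OF S(2)]] by auto
  have "\<bar>row j p q y - row j p' q' y\<bar> = \<bar>be j * (eta (y+p) - eta (y+p')) + ga j * (eta (y+q) - eta (y+q'))\<bar>"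
    by (simp add: row_def algebra_simps)
  also have "\<dots> \<le> be j * \<bar>eta (y+p) - eta (y+p')\<bar> + ga j * \<bar>eta (y+q) - eta (y+q')\<bar>"
    using c by (simp add: abs_mult order_trans[OF abs_triangle_ineq])
  also have "\<dots> \<le> be j * (a * S) + ga j * (a * S)"
    using mult_left_mono[OF h2 c(1)] mult_left_mono[OF h3 c(2)] by linarith
  finally show ?thesis by (simp add: algebra_simps)
qed

definition box :: "(int \<Rightarrow> real) \<Rightarrow> bool" where
  "box x \<longleftrightarrow> (\<forall>j\<in>{-N..N}. rL \<le> x j \<and> x j \<le> rU)"

lemma NN: "-N \<le> N" using K2 KN by simp

lemma nb_in: "-N \<le> j \<Longrightarrow> j \<le> N \<Longrightarrow> -N \<le> nbl j \<and> nbl j \<le> N \<and> -N \<le> nbr j \<and> nbr j \<le> N"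
  unfolding nbl_def nbr_def by auto

lemma nb_dist: "-N \<le> j \<Longrightarrow> j \<le> N \<Longrightarrow> \<bar>x (nbl j) - y (nbl j)\<bar> \<le> sup_dist N x y \<and> \<bar>x (nbr j) - y (nbr j)\<bar> \<le> sup_dist N x y"
  using nb_in sd_ge by auto

lemma boxD: "box x \<Longrightarrow> -N \<le> j \<Longrightarrow> j \<le> N \<Longrightarrow> rL \<le> x j \<and> x j \<le> rU"
  unfolding box_def by auto

lemma DD0:
  assumes x: "box x" "box x'" and k: "-N \<le> k" "k \<le> N" and le: "x' k \<le> x k"
    and S: "x k - x' k = sup_dist N x x'"
  shows "(m - 5 * a) * sup_dist N x x' \<le> psiE eta N K x k - psiE eta N K x' k"
proof -
  let ?S = "sup_dist N x x'"
  let ?p = "x (nbl k)" and ?q = "x (nbr k)" and ?p' = "x' (nbl k)" and ?q' = "x' (nbr k)"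
  have b: "rL \<le> ?p" "?p \<le> rU" "rL \<le> ?q" "?q \<le> rU" "rL \<le> ?p'" "?p' \<le> rU" "rL \<le> ?q'" "?q' \<le> rU"
    using boxD[OF x(1)] boxD[OF x(2)] nb_in[OF k] by auto
  have bk: "rL \<le> x k" "x k \<le> rU" "rL \<le> x' k" "x' k \<le> rU" using boxD[OF x(1) k] boxD[OF x(2) k] by auto
  have h1: "(m - 5 * a) * ?S + (be k + ga k) * a * ?S \<le> row k ?p ?q (x k) - row k ?p ?q (x' k)"
    using row_mono[OF k b(1-4) bk(3) le bk(2)] S by simp
  have h2: "\<bar>row k ?p ?q (x' k) - row k ?p' ?q' (x' k)\<bar> \<le> (be k + ga k) * a * ?S"
    using row_lip[OF k bk(3,4) b(1,2,5,6) b(3,4,7,8)] nb_dist[OF k, of x x'] by auto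
  show ?thesis using h1 h2 form[OF k, of x] form[OF k, of x'] by linarith
qed

lemma DD:
  assumes x: "box x" "box x'"
  shows "\<exists>k\<in>{-N..N}. (m - 5 * a) * sup_dist N x x' \<le> \<bar>psiE eta N K x k - psiE eta N K x' k\<bar>"
proof -
  obtain k where k: "k \<in> {-N..N}" "\<bar>x k - x' k\<bar> = sup_dist N x x'" using sd_attain[OF NN] by blast
  show ?thesis
  proof (cases "x' k \<le> x k")
    case True
    with DD0[OF x _ _ True] k show ?thesis by force
  next
    case False
    have "sup_dist N x' x = sup_dist N x x'" unfolding sup_dist_def by (simp add: abs_minus_commute)
    with DD0[OF x(2) x(1) _ _, of k] k False show ?thesis by force
  qed
qed

lemma m5a: "0 < m - 5 * a" using ma a0 by simp

lemma uniq:
  assumes "box x" "box x'" "\<And>j. -N \<le> j \<Longrightarrow> j \<le> N \<Longrightarrow> psiE eta N K x j = psiE eta N K x' j"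
  shows "-N \<le> j \<Longrightarrow> j \<le> N \<Longrightarrow> x j = x' j"
proof -
  assume j: "-N \<le> j" "j \<le> N"
  obtain k where "k \<in> {-N..N}" "(m - 5 * a) * sup_dist N x x' \<le> \<bar>psiE eta N K x k - psiE eta N K x' k\<bar>"
    using DD[OF assms(1,2)] by blast
  with assms(3) have "(m - 5 * a) * sup_dist N x x' \<le> 0" by auto
  with m5a sd_nonneg[OF NN, of x x'] have "sup_dist N x x' = 0"
    by (simp add: mult_le_0_iff)
  with sd_ge[of j N x x'] j show "x j = x' j" by auto
qed

lemma ctr:
  assumes "box x" "box x'" "\<And>j. -N \<le> j \<Longrightarrow> j \<le> N \<Longrightarrow> \<bar>psiE eta N K x j - psiE eta N K x' j\<bar> \<le> B"
  shows "(m - 5 * a) * sup_dist N x x' \<le> B"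
  using DD[OF assms(1,2)] assms(3) by force

definition qq :: real where "qq = 5 * a / (2 * (m - 5 * a))"

lemma qq: "0 \<le> qq" "qq < 1"
  using m5a a0 ma unfolding qq_def by (auto simp: divide_simps)

lemma row_cont:
  assumes "0 < p" "0 < q" "0 < y"
  shows "isCont (row j p q) y"
proof -
  have c1: "isCont eta y" "isCont eta (2*y)" "isCont eta (y+p)" "isCont eta (y+q)"
    using cont assms by auto
  have c2: "isCont (\<lambda>y. eta (2*y)) y" by (rule isCont_o2[where f="\<lambda>y. 2*y" and g=eta]) (simp_all add: c1)
  have c3: "isCont (\<lambda>y. eta (y+p)) y" by (rule isCont_o2[where f="\<lambda>y. y+p" and g=eta]) (simp_all add: c1)
  have c4: "isCont (\<lambda>y. eta (y+q)) y" by (rule isCont_o2[where f="\<lambda>y. y+q" and g=eta]) (simp_all add: c1)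
  show ?thesis unfolding row_def[abs_def]
    by (intro continuous_intros c1(1) c2 c3 c4)
qed

end

locale qcj = qc +
  fixes c :: "int \<Rightarrow> real"
  assumes cb: "\<And>j p q. -N \<le> j \<Longrightarrow> j \<le> N \<Longrightarrow> rL \<le> p \<Longrightarrow> p \<le> rU \<Longrightarrow> rL \<le> q \<Longrightarrow> q \<le> rU
      \<Longrightarrow> row j p q rL < c j \<and> c j < row j p q rU"
begin

definition sol :: "int \<Rightarrow> real \<Rightarrow> real \<Rightarrow> real" where
  "sol j p q = (SOME y. rL \<le> y \<and> y \<le> rU \<and> row j p q y = c j)"

lemma sol:
  assumes j: "-N \<le> j" "j \<le> N" and pq: "rL \<le> p" "p \<le> rU" "rL \<le> q" "q \<le> rU"
  shows "rL < sol j p q \<and> sol j p q < rU \<and> row j p q (sol j p q) = c j"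
proof -
  have "\<exists>y. rL \<le> y \<and> y \<le> rU \<and> row j p q y = c j"
    using cb[OF j pq] rLU rL0 pq
    by (intro IVT) (auto intro!: row_cont)
  then have h: "rL \<le> sol j p q \<and> sol j p q \<le> rU \<and> row j p q (sol j p q) = c j"
    unfolding sol_def by (rule someI_ex)
  then show ?thesis using cb[OF j pq] by (metis order_less_irrefl order.not_eq_order_implies_strict)
qed

lemma sol_lip:
  assumes j: "-N \<le> j" "j \<le> N"
    and p: "rL \<le> p" "p \<le> rU" "rL \<le> p'" "p' \<le> rU" and q: "rL \<le> q" "q \<le> rU" "rL \<le> q'" "q' \<le> rU"
    and S: "\<bar>p - p'\<bar> \<le> S" "\<bar>q - q'\<bar> \<le> S"
  shows "\<bar>sol j p q - sol j p' q'\<bar> \<le> qq * S"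
proof -
  define y where "y = sol j p q"
  define y' where "y' = sol j p' q'"
  have s1: "rL < y" "y < rU" "row j p q y = c j" using sol[OF j p(1,2) q(1,2)] y_def by auto
  have s2: "rL < y'" "y' < rU" "row j p' q' y' = c j" using sol[OF j p(3,4) q(3,4)] y'_def by auto
  have cf: "0 \<le> be j" "0 \<le> ga j" "be j + ga j \<le> 5/2" using coef[OF j] by auto
  have S0: "0 \<le> S" using S by linarith
  have bnd: "(be j + ga j) * a * S \<le> 5/2 * a * S"
    using mult_right_mono[OF cf(3), of "a*S"] a0 S0 by (simp add: mult.assoc)
  have key: "(m - 5 * a) * \<bar>y - y'\<bar> \<le> 5/2 * a * S"
  proof (cases "y' \<le> y")
    case True
    have h1: "(m - 5 * a) * (y - y') + (be j + ga j) * a * (y - y') \<le> row j p q y - row j p q y'"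
      using row_mono[OF j p(1,2) q(1,2), of y' y] s1 s2 True by auto
    have h2: "\<bar>row j p' q' y' - row j p q y'\<bar> \<le> (be j + ga j) * a * S"
      using row_lip[OF j _ _ p(3,4,1,2) q(3,4,1,2), of y'] s2 S by (auto simp: abs_minus_commute)
    have "0 \<le> (be j + ga j) * a * (y - y')" using cf a0 True by auto
    moreover have "\<bar>y - y'\<bar> = y - y'" using True by simp
    ultimately show ?thesis using h1 abs_le_D1[OF h2] s1 s2 bnd by ((simp only:), (linarith)?)
  next
    case False
    have h1: "(m - 5 * a) * (y' - y) + (be j + ga j) * a * (y' - y) \<le> row j p' q' y' - row j p' q' y"
      using row_mono[OF j p(3,4) q(3,4), of y y'] s1 s2 False by auto
    have h2: "\<bar>row j p q y - row j p' q' y\<bar> \<le> (be j + ga j) * a * S"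
      using row_lip[OF j _ _ p q, of y] s1 S by auto
    have "0 \<le> (be j + ga j) * a * (y' - y)" using cf a0 False by auto
    moreover have "\<bar>y - y'\<bar> = y' - y" using False by simp
    ultimately show ?thesis using h1 abs_le_D1[OF h2] s1 s2 bnd by ((simp only:), (linarith)?)
  qed
  then have "\<bar>y - y'\<bar> \<le> 5/2 * a * S / (m - 5 * a)" using m5a by (simp add: field_simps)
  then show ?thesis unfolding qq_def y_def y'_def by (simp add: field_simps)
qed

definition Th :: "(int \<Rightarrow> real) \<Rightarrow> int \<Rightarrow> real" where
  "Th x = (\<lambda>j. if j \<in> {-N..N} then sol j (x (nbl j)) (x (nbr j)) else rL)"

lemma Th_box: "box x \<Longrightarrow> -N \<le> j \<Longrightarrow> j \<le> N \<Longrightarrow> rL < Th x j \<and> Th x j < rU \<and> row j (x (nbl j)) (x (nbr j)) (Th x j) = c j"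
  unfolding Th_def using sol nb_in boxD by auto

lemma Th_box': "box x \<Longrightarrow> box (Th x)"
  using Th_box unfolding box_def by fastforce

lemma Th_ctr:
  assumes "box x" "box x'" "-N \<le> j" "j \<le> N"
  shows "\<bar>Th x j - Th x' j\<bar> \<le> qq * sup_dist N x x'"
  using sol_lip[OF assms(3,4)] nb_in[OF assms(3,4)] boxD[OF assms(1)] boxD[OF assms(2)] nb_dist[OF assms(3,4), of x x']
  unfolding Th_def using assms(3,4) by auto

lemma Th_ctr': "box x \<Longrightarrow> box x' \<Longrightarrow> sup_dist N (Th x) (Th x') \<le> qq * sup_dist N x x'"
  by (rule sd_le[OF NN]) (use Th_ctr in auto)

lemma jacobi:
  "\<exists>x. box x \<and> (\<forall>j\<in>{-N..N}. rL < x j \<and> x j < rU) \<and> (\<forall>j\<in>{-N..N}. psiE eta N K x j = c j)"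
proof -
  define X where "X n = (Th ^^ n) (\<lambda>_. rL)" for n
  have XS: "X (Suc n) = Th (X n)" for n by (simp add: X_def)
  have Xb: "box (X n)" for n
  proof (induction n)
    case 0 then show ?case using rLU by (simp add: X_def box_def)
  next
    case (Suc n) then show ?case unfolding XS by (rule Th_box')
  qed
  define D where "D = sup_dist N (X 1) (X 0)"
  have geo: "sup_dist N (X (Suc n)) (X n) \<le> qq ^ n * D" for n
  proof (induction n)
    case 0 then show ?case by (simp add: D_def)
  next
    case (Suc n)
    have "sup_dist N (X (Suc (Suc n))) (X (Suc n)) \<le> qq * sup_dist N (X (Suc n)) (X n)"
      unfolding XS[of "Suc n"] XS[of n] using Th_ctr' Xb XS by metis
    also have "\<dots> \<le> qq * (qq ^ n * D)" using Suc qq(1) by (rule mult_left_mono)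
    finally show ?case by simp
  qed
  have conv: "\<exists>L. (\<lambda>n. X n j) \<longlonglongrightarrow> L" if j: "j \<in> {-N..N}" for j
  proof -
    have "summable (\<lambda>n. X (Suc n) j - X n j)"
    proof (rule summable_comparison_test)
      show "\<exists>N0. \<forall>n\<ge>N0. norm (X (Suc n) j - X n j) \<le> qq ^ n * D"
      proof (intro exI allI impI)
        fix n :: nat
        have "\<bar>X (Suc n) j - X n j\<bar> \<le> sup_dist N (X (Suc n)) (X n)" by (rule sd_ge[OF j])
        then show "norm (X (Suc n) j - X n j) \<le> qq ^ n * D" using geo[of n] by simp
      qed
      show "summable (\<lambda>n. qq ^ n * D)" using qq by (intro summable_mult2 summable_geometric) simp
    qed
    then have "(\<lambda>n. \<Sum>i<n. X (Suc i) j - X i j) \<longlonglongrightarrow> suminf (\<lambda>n. X (Suc n) j - X n j)"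
      by (rule summable_LIMSEQ)
    then have "(\<lambda>n. X 0 j + (\<Sum>i<n. X (Suc i) j - X i j)) \<longlonglongrightarrow> X 0 j + suminf (\<lambda>n. X (Suc n) j - X n j)"
      by (intro tendsto_intros)
    then show ?thesis by (auto simp: sum_lessThan_telescope[where f="\<lambda>i. X i j"])
  qed
  define xs where "xs j = (if j \<in> {-N..N} then lim (\<lambda>n. X n j) else rL)" for j
  have xl: "(\<lambda>n. X n j) \<longlonglongrightarrow> xs j" if "j \<in> {-N..N}" for j
    using conv[OF that] that unfolding xs_def by (auto simp: convergent_LIMSEQ_iff[symmetric] convergent_def)
  have xb: "box xs"
    unfolding box_def
  proof
    fix j assume j: "j \<in> {-N..N}"
    show "rL \<le> xs j \<and> xs j \<le> rU"
      using LIMSEQ_le_const[OF xl[OF j], of rL] LIMSEQ_le_const2[OF xl[OF j], of rU] boxD[OF Xb] j by auto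
  qed
  have fixp: "Th xs j = xs j" if j: "j \<in> {-N..N}" for j
  proof -
    have t0: "(\<lambda>n. \<Sum>i\<in>{-N..N}. \<bar>xs i - X n i\<bar>) \<longlonglongrightarrow> 0"
    proof -
      have "(\<lambda>n. \<Sum>i\<in>{-N..N}. \<bar>xs i - X n i\<bar>) \<longlonglongrightarrow> (\<Sum>i\<in>{-N..N}. 0)"
      proof (rule tendsto_sum)
        fix i assume i: "i \<in> {-N..N}"
        have "(\<lambda>n. xs i - X n i) \<longlonglongrightarrow> xs i - xs i" by (intro tendsto_intros xl[OF i])
        then show "(\<lambda>n. \<bar>xs i - X n i\<bar>) \<longlonglongrightarrow> 0" using tendsto_rabs_zero by fastforce
      qed
      then show ?thesis by simp
    qed
    have t1: "(\<lambda>n. qq * (\<Sum>i\<in>{-N..N}. \<bar>xs i - X n i\<bar>)) \<longlonglongrightarrow> 0"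
      using tendsto_mult_right_zero[OF t0] by simp
    have bd: "\<bar>X (Suc n) j - Th xs j\<bar> \<le> qq * (\<Sum>i\<in>{-N..N}. \<bar>xs i - X n i\<bar>)" for n
    proof -
      have "\<bar>Th xs j - X (Suc n) j\<bar> \<le> qq * sup_dist N xs (X n)"
        using Th_ctr[OF xb Xb] j XS by auto
      also have "\<dots> \<le> qq * (\<Sum>i\<in>{-N..N}. \<bar>xs i - X n i\<bar>)"
        using sd_sum[OF NN] qq(1) by (rule mult_left_mono)
      finally show ?thesis by (metis abs_minus_commute)
    qed
    have "(\<lambda>n. \<bar>X (Suc n) j - Th xs j\<bar>) \<longlonglongrightarrow> 0"
      by (rule tendsto_sandwich[OF _ _ tendsto_const t1]) (use bd in auto)
    then have "(\<lambda>n. X (Suc n) j - Th xs j) \<longlonglongrightarrow> 0"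
      by (rule tendsto_rabs_zero_cancel)
    then have "(\<lambda>n. X (Suc n) j) \<longlonglongrightarrow> Th xs j" by (rule LIM_zero_cancel)
    moreover have "(\<lambda>n. X (Suc n) j) \<longlonglongrightarrow> xs j" using LIMSEQ_Suc[OF xl[OF j]] .
    ultimately show ?thesis by (rule LIMSEQ_unique)
  qed
  show ?thesis
  proof (intro exI conjI ballI)
    show "box xs" by (rule xb)
    fix j assume j: "j \<in> {-N..N}"
    show "rL < xs j" "xs j < rU" using Th_box[OF xb, of j] fixp[OF j] j by auto
  next
    fix j assume j: "j \<in> {-N..N}"
    then show "psiE eta N K xs j = c j"
      using form[of j xs] Th_box[OF xb, of j] fixp[OF j] by auto
  qed
qed

end

context qc begin

end


lemma sum_last: "(a::int) \<le> b \<Longrightarrow> (\<Sum>i\<in>{a..b}. g i) = (\<Sum>i\<in>{a..b-1}. g i) + (g b :: real)"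
proof -
  assume "a \<le> b"
  then have "{a..b} = insert b {a..b-1}" by auto
  then show ?thesis by simp
qed

lemma tele_nat: "(\<Sum>i\<in>{(a::int)..a + int n - 1}. h i - h (i-1)) = h (a + int n - 1) - (h (a - 1) :: real)"
proof (induction n)
  case 0 then show ?case by simp
next
  case (Suc n)
  have "(\<Sum>i\<in>{a..a + int (Suc n) - 1}. h i - h (i-1)) = (\<Sum>i\<in>{a..a + int n - 1}. h i - h (i-1)) + (h (a + int n) - h (a + int n - 1))"
    using sum_last[of a "a + int n" "\<lambda>i. h i - h (i-1)"] by simp
  then show ?case using Suc by simp
qed

lemma tele: "(a::int) - 1 \<le> b \<Longrightarrow> (\<Sum>i\<in>{a..b}. h i - h (i-1)) = h b - (h (a - 1) :: real)"
  using tele_nat[where a=a and n="nat (b - a + 1)" and h=h] by simp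

lemma cb_gen:
  fixes A B C L1 L2 L3 e1 e2 Ph h t1 t2 g1 g2 g3 :: real
  assumes nn: "0 \<le> B" "0 \<le> C" "0 \<le> L1" "0 \<le> L2" "0 \<le> L3"
    and idc: "4 - (A+B+C) - L3 = 2 - L1 - L2" and k: "0 \<le> 2 - L1 - L2" and e: "e2 \<le> e1"
    and t: "t1 \<le> e1" "t2 \<le> e1" "g1 \<le> e1" "e2 \<le> g2" "e2 \<le> g3"
    and P: "h + 4*e1 - 2*e2 < Ph"
  shows "h + A*e1 + B*t1 + C*t2 < Ph - (L3*g1 - L1*g2 - L2*g3)"
proof -
  have a1: "B*t1 \<le> B*e1" "C*t2 \<le> C*e1" "L3*g1 \<le> L3*e1" "L1*e2 \<le> L1*g2" "L2*e2 \<le> L2*g3"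
    using mult_left_mono t nn by auto
  have a2: "(2 - L1 - L2)*e2 \<le> (2 - L1 - L2)*e1" using mult_left_mono[OF e k] .
  have a3: "(4 - (A+B+C) - L3)*e1 = (2 - L1 - L2)*e1" using idc by simp
  have a4: "4*e1 - A*e1 - B*e1 - C*e1 - L3*e1 = 2*e1 - L1*e1 - L2*e1" using a3 by (simp add: algebra_simps)
  have a5: "2*e2 - L1*e2 - L2*e2 \<le> 2*e1 - L1*e1 - L2*e1" using a2 by (simp add: algebra_simps)
  show ?thesis using a1 a4 a5 P by linarith
qed

lemma cb_gen2:
  fixes A B C L1 L2 L3 e1 e2 Ph h t1 t2 g1 g2 g3 :: real
  assumes nn: "0 \<le> B" "0 \<le> C" "0 \<le> L1" "0 \<le> L2" "0 \<le> L3"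
    and idc: "4 - (A+B+C) - L3 = 2 - L1 - L2" and k: "0 \<le> 2 - L1 - L2" and e: "e2 \<le> e1"
    and t: "e2 \<le> t1" "e2 \<le> t2" "e2 \<le> g1" "g2 \<le> e1" "g3 \<le> e1"
    and P: "Ph < h + 4*e2 - 2*e1"
  shows "Ph - (L3*g1 - L1*g2 - L2*g3) < h + A*e2 + B*t1 + C*t2"
proof -
  have a1: "B*e2 \<le> B*t1" "C*e2 \<le> C*t2" "L3*e2 \<le> L3*g1" "L1*g2 \<le> L1*e1" "L2*g3 \<le> L2*e1"
    using mult_left_mono t nn by auto
  have a2: "(2 - L1 - L2)*e2 \<le> (2 - L1 - L2)*e1" using mult_left_mono[OF e k] .
  have a3: "(4 - (A+B+C) - L3)*e2 = (2 - L1 - L2)*e2" using idc by simp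
  have a4: "4*e2 - A*e2 - B*e2 - C*e2 - L3*e2 = 2*e2 - L1*e2 - L2*e2" using a3 by (simp add: algebra_simps)
  have a5: "2*e2 - L1*e2 - L2*e2 \<le> 2*e1 - L1*e1 - L2*e1" using a2 by (simp add: algebra_simps)
  show ?thesis using a1 a4 a5 P by linarith
qed

lemma Phi_sym_nat:
  fixes f :: "int \<Rightarrow> real"
  assumes fa: "\<And>j. 0 \<le> j \<Longrightarrow> j \<le> N \<Longrightarrow> f (j + 1) = - f (-j)"
  shows "int n \<le> N \<Longrightarrow> (\<Sum>i\<in>{-N..int n}. f i) = (\<Sum>i\<in>{-N..-int n}. f i)"
proof (induction n)
  case 0 then show ?case by simp
next
  case (Suc n)
  have h1: "(\<Sum>i\<in>{-N..int n + 1}. f i) = (\<Sum>i\<in>{-N..int n}. f i) + f (int n + 1)"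
    using sum_last[of "-N" "int n + 1" f] Suc.prems by simp
  have h2: "(\<Sum>i\<in>{-N..-int n}. f i) = (\<Sum>i\<in>{-N..-int n - 1}. f i) + f (-int n)"
    using sum_last[of "-N" "-int n" f] Suc.prems by simp
  have h3: "f (int n + 1) = - f (- int n)" using fa[of "int n"] Suc.prems by simp
  have IH: "(\<Sum>i\<in>{-N..int n}. f i) = (\<Sum>i\<in>{-N..-int n}. f i)" using Suc by simp
  have eqs: "int (Suc n) = int n + 1" "- (int n + 1) = - int n - 1" by simp_all
  show ?case by (simp only: eqs) (use h1 h2 h3 IH in linarith)
qed

lemma Phi_sym:
  fixes f :: "int \<Rightarrow> real"
  assumes fa: "\<And>j. 0 \<le> j \<Longrightarrow> j \<le> N \<Longrightarrow> f (j + 1) = - f (-j)"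
  shows "-N \<le> j \<Longrightarrow> j \<le> N \<Longrightarrow> (\<Sum>i\<in>{-N..-j}. f i) = (\<Sum>i\<in>{-N..j}. f i)"
proof -
  assume j: "-N \<le> j" "j \<le> N"
  show ?thesis
  proof (cases "0 \<le> j")
    case True
    then show ?thesis using Phi_sym_nat[OF fa, where n="nat j"] j by simp
  next
    case False
    then show ?thesis using Phi_sym_nat[OF fa, where n="nat (-j)"] j by simp
  qed
qed

lemma Phi_total:
  fixes f :: "int \<Rightarrow> real"
  assumes fa: "\<And>j. 0 \<le> j \<Longrightarrow> j \<le> N \<Longrightarrow> f (j + 1) = - f (-j)" and N: "0 \<le> N"
  shows "(\<Sum>i\<in>{-N..N+1}. f i) = 0"
proof -
  have "(\<Sum>i\<in>{-N..N+1}. f i) = (\<Sum>i\<in>{-N..N}. f i) + f (N+1)"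
    using sum_last[of "-N" "N+1" f] N by simp
  also have "(\<Sum>i\<in>{-N..N}. f i) = (\<Sum>i\<in>{-N..-N}. f i)" using Phi_sym[where f=f and N=N and j=N, OF fa] N by simp
  also have "\<dots> = f (-N)" by simp
  finally show ?thesis using fa[of N] N by simp
qed

context qc begin

lemma Km1: "-1 - K = -K - 1" by simp

definition eh :: "real \<Rightarrow> real" where "eh y = eta_hat eta y"

definition Aterm :: "(int \<Rightarrow> real) \<Rightarrow> real" where
  "Aterm r = eh (r (-K)) - eta (r (-K)) - eta (r (-K-1) + r (-K)) - eta (r (-K) + r (-K+1))"
definition Bterm :: "(int \<Rightarrow> real) \<Rightarrow> real" where
  "Bterm r = eta (r K) + eta (r (K-1) + r K) + eta (r K + r (K+1)) - eh (r K)"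
definition SFc :: "(int \<Rightarrow> real) \<Rightarrow> int \<Rightarrow> real" where
  "SFc r j = (if j < -N then 0 else if j \<le> -K then eh (r j)
     else if j \<le> K then Aterm r + eta (r j) + eta (r (j-1) + r j) + eta (r j + r (j+1))
     else if j \<le> N then Aterm r + Bterm r + eh (r j) else Aterm r + Bterm r)"

lemma FQCF_tele:
  assumes "-N \<le> j" "j \<le> N + 1"
  shows "FQCF eta N K r j = SFc r j - SFc r (j-1)"
proof -
  consider "j = -N" | "-N+1 \<le> j \<and> j \<le> -K" | "j = -K+1" | "-K+2 \<le> j \<and> j \<le> K" | "j = K+1" | "K+2 \<le> j \<and> j \<le> N" | "j = N+1"
    using assms by linarith
  then show ?thesis
  proof cases
    case 1 then show ?thesis using K2 KN by (simp add: FQCF_def SFc_def eh_def)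
  next
    case 2 then show ?thesis using K2 KN by (simp add: FQCF_def SFc_def eh_def)
  next
    case 3 then have j: "j = 1 - K" by simp
    show ?thesis using K2 KN unfolding j by (simp add: FQCF_def SFc_def eh_def Aterm_def algebra_simps Km1)
  next
    case 4 then show ?thesis using K2 KN by (simp add: FQCF_def SFc_def eh_def Aterm_def algebra_simps Km1)
  next
    case 5 then show ?thesis using K2 KN by (simp add: FQCF_def SFc_def eh_def Aterm_def Bterm_def algebra_simps)
  next
    case 6 then show ?thesis using K2 KN by (simp add: FQCF_def SFc_def eh_def)
  next
    case 7 then show ?thesis using K2 KN by (simp add: FQCF_def SFc_def eh_def)
  qed
qed

lemma sum_FQCF: "-N - 1 \<le> j \<Longrightarrow> j \<le> N + 1 \<Longrightarrow> (\<Sum>i\<in>{-N..j}. FQCF eta N K r i) = SFc r j"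
proof -
  assume j: "-N - 1 \<le> j" "j \<le> N + 1"
  have "(\<Sum>i\<in>{-N..j}. FQCF eta N K r i) = (\<Sum>i\<in>{-N..j}. SFc r i - SFc r (i-1))"
    using FQCF_tele j by (intro sum.cong) auto
  also have "\<dots> = SFc r j - SFc r (-N-1)" using tele[of "-N" j "SFc r"] j by simp
  finally show ?thesis by (simp add: SFc_def)
qed

lemma psiE_out: "psiE eta N K r (-N-1) = 0" "psiE eta N K r (N+1) = 0"
  by (simp_all add: psiE_def)

lemma sum_FQCE: "-N - 1 \<le> j \<Longrightarrow> (\<Sum>i\<in>{-N..j}. FQCE eta N K r i) = psiE eta N K r j"
proof -
  assume j: "-N - 1 \<le> j"
  have "(\<Sum>i\<in>{-N..j}. FQCE eta N K r i) = psiE eta N K r j - psiE eta N K r (-N-1)"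
    unfolding FQCE_def using tele[of "-N" j "psiE eta N K r"] j by simp
  then show ?thesis by (simp add: psiE_out)
qed

lemma sym_AB: "symmetric_vec N r \<Longrightarrow> Aterm r + Bterm r = 0"
proof -
  assume s: "symmetric_vec N r"
  have sv: "\<And>j. j \<in> {1..N} \<Longrightarrow> r (-j) = r j" using s unfolding symmetric_vec_def by blast
  have s0: "r (-K) = r K" "r (-(K+1)) = r (K+1)" "r (-(K-1)) = r (K-1)"
    using sv[of K] sv[of "K+1"] sv[of "K-1"] K2 KN by auto
  have e: "-K-1 = -(K+1)" "-K+1 = -(K-1)" by simp_all
  have s1: "r (-K) = r K" "r (-K-1) = r (K+1)" "r (-K+1) = r (K-1)"
    using s0 unfolding e by auto
  show ?thesis unfolding Aterm_def Bterm_def eh_def using s1 by (simp add: algebra_simps)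
qed

lemma sym_facts:
  assumes s: "symmetric_vec N r"
  shows "r K = r (-K)" "r (K+1) = r (-K-1)" "r (1+K) = r (-K-1)" "r (K-1) = r (1-K)" "r (-1+K) = r (1-K)"
proof -
  have sv: "\<And>j. j \<in> {1..N} \<Longrightarrow> r (-j) = r j" using s unfolding symmetric_vec_def by blast
  have s0: "r (-K) = r K" "r (-(K+1)) = r (K+1)" "r (-(K-1)) = r (K-1)"
    using sv[of K] sv[of "K+1"] sv[of "K-1"] K2 KN by auto
  have e: "-K-1 = -(K+1)" "1-K = -(K-1)" by simp_all
  show "r K = r (-K)" "r (K+1) = r (-K-1)" "r (1+K) = r (-K-1)" "r (K-1) = r (1-K)" "r (-1+K) = r (1-K)"
    using s0 unfolding e by (auto simp: add.commute)
qed

definition Gc :: "(int \<Rightarrow> real) \<Rightarrow> int \<Rightarrow> real" where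
  "Gc r j = la3 j * eta (2 * r (-K)) - la1 j * eta (r (-K-1) + r (-K)) - la2 j * eta (r (-K) + r (-K+1))"

lemma Gform:
  assumes s: "symmetric_vec N r" and j: "-N \<le> j" "j \<le> N"
  shows "SFc r j - psiE eta N K r j = Gc r j"
proof -
  note sf = sym_facts[OF s]
  consider "j \<le> -K-2" | "j = -K-1" | "j = -K" | "j = -K+1" | "-K+2 \<le> j \<and> j \<le> K-2"
    | "j = K-1" | "j = K" | "j = K+1" | "j \<ge> K+2" by linarith
  then show ?thesis
  proof cases
    case 1 then show ?thesis using j K2 KN
      by (simp add: psiE_def SFc_def eh_def eta_hat_def Gc_def la1_def la2_def la3_def abs_if)
  next
    case 2 then have j: "j = -K-1" by simp
    show ?thesis using K2 KN unfolding j
      by (simp add: psiE_def SFc_def eh_def eta_hat_def Gc_def la1_def la2_def la3_def abs_if algebra_simps Km1)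
  next
    case 3 then have j: "j = -K" by simp
    show ?thesis using K2 KN unfolding j
      by (simp add: psiE_def SFc_def eh_def eta_hat_def Gc_def la1_def la2_def la3_def abs_if algebra_simps Km1)
  next
    case 4 then have j: "j = 1-K" by simp
    show ?thesis using K2 KN unfolding j
      by (simp add: psiE_def SFc_def eh_def eta_hat_def Aterm_def Gc_def la1_def la2_def la3_def abs_if algebra_simps Km1)
  next
    case 5 then show ?thesis using K2 KN
      by (simp add: psiE_def SFc_def eh_def eta_hat_def Aterm_def Gc_def la1_def la2_def la3_def abs_if algebra_simps Km1)
  next
    case 6 then have j: "j = K-1" by simp
    show ?thesis using K2 KN unfolding j
      by (simp add: psiE_def SFc_def eh_def eta_hat_def Aterm_def Gc_def la1_def la2_def la3_def abs_if algebra_simps Km1 sf)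
  next
    case 7 then have j: "j = K" by simp
    show ?thesis using K2 KN unfolding j
      by (simp add: psiE_def SFc_def eh_def eta_hat_def Aterm_def Gc_def la1_def la2_def la3_def abs_if algebra_simps Km1 sf)
  next
    case 8 then have j: "j = K+1" by simp
    show ?thesis using K2 KN unfolding j
      by (simp add: psiE_def SFc_def eh_def eta_hat_def Aterm_def Bterm_def Gc_def la1_def la2_def la3_def abs_if algebra_simps Km1 sf)
  next
    case 9
    have "Aterm r + Bterm r = 0" by (rule sym_AB[OF s])
    then show ?thesis using j K2 KN 9
      by (simp add: psiE_def SFc_def eh_def eta_hat_def Gc_def la1_def la2_def la3_def abs_if)
  qed
qed

lemma cbounds:
  assumes s: "symmetric_vec N r" and b: "box r" and j: "-N \<le> j" "j \<le> N"
    and p: "rL \<le> p" "p \<le> rU" and q: "rL \<le> q" "q \<le> rU"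
    and P1: "eta rL + 4 * eta (2 * rL) - 2 * eta (2 * rU) < Ph"
    and P2: "Ph < eta rU + 4 * eta (2 * rU) - 2 * eta (2 * rL)"
  shows "row j p q rL < Ph - Gc r j \<and> Ph - Gc r j < row j p q rU"
proof -
  have cf: "0 \<le> al j" "0 \<le> be j" "0 \<le> ga j" "0 \<le> la1 j" "0 \<le> la2 j" "0 \<le> la3 j"
    "4 - (al j + be j + ga j) - la3 j = 2 - la1 j - la2 j" "0 \<le> 2 - la1 j - la2 j"
    using coef[OF j] by auto
  have KI: "-N \<le> -K-1" "-K+1 \<le> N" using K2 KN by auto
  have rb: "rL \<le> r (-K-1)" "r (-K-1) \<le> rU" "rL \<le> r (-K)" "r (-K) \<le> rU" "rL \<le> r (-K+1)" "r (-K+1) \<le> rU"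
    using boxD[OF b] KI K2 by auto
  have m1: "eta (2*rU) \<le> eta (2*rL)" using E2mono rLU by simp
  have mt: "eta (rL + p) \<le> eta (2*rL)" "eta (rL + q) \<le> eta (2*rL)"
    "eta (2*rU) \<le> eta (rU + p)" "eta (2*rU) \<le> eta (rU + q)"
    using E2mono p q by auto
  have mg: "eta (2 * r (-K)) \<le> eta (2*rL)" "eta (2*rU) \<le> eta (2 * r (-K))"
    "eta (r (-K-1) + r (-K)) \<le> eta (2*rL)" "eta (2*rU) \<le> eta (r (-K-1) + r (-K))"
    "eta (r (-K) + r (-K+1)) \<le> eta (2*rL)" "eta (2*rU) \<le> eta (r (-K) + r (-K+1))"
    using E2mono rb by auto
  have lo: "row j p q rL < Ph - Gc r j"
    unfolding row_def Gc_def
    by (rule cb_gen[OF cf(2,3,4,5,6,7,8) m1 mt(1,2) mg(1) mg(4) mg(6) P1])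
  have hi: "Ph - Gc r j < row j p q rU"
    unfolding row_def Gc_def
    by (rule cb_gen2[OF cf(2,3,4,5,6,7,8) m1 mt(3,4) mg(2) mg(3) mg(5) P2])
  show ?thesis using lo hi by simp
qed

lemma reflect: "-N \<le> j \<Longrightarrow> j \<le> N \<Longrightarrow> psiE eta N K (\<lambda>i. x (-i)) j = psiE eta N K x (-j)"
proof -
  assume j: "-N \<le> j" "j \<le> N"
  have n: "nbl (-j) = - nbr j" "nbr (-j) = - nbl j" unfolding nbl_def nbr_def by auto
  show ?thesis using form[OF j, of "\<lambda>i. x (-i)"] form[of "-j" x] j
    by (simp add: n row_def coef_sym algebra_simps)
qed

lemma Gc_sym: "Gc r (-j) = Gc r j"
  unfolding Gc_def by (simp add: coef_sym)

lemma existence: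
  fixes f :: "int \<Rightarrow> real" and r :: "int \<Rightarrow> real"
  assumes s: "symmetric_vec N r" and b: "box r"
    and fa: "\<And>j. 0 \<le> j \<Longrightarrow> j \<le> N \<Longrightarrow> f (j + 1) = - f (-j)"
    and Pb: "\<And>j. -N \<le> j \<Longrightarrow> j \<le> N \<Longrightarrow>
        eta rL + 4 * eta (2 * rL) - 2 * eta (2 * rU) < - (\<Sum>i=-N..j. f i) \<and>
        - (\<Sum>i=-N..j. f i) < eta rU + 4 * eta (2 * rU) - 2 * eta (2 * rL)"
  shows "\<exists>r'. symmetric_vec N r' \<and> (\<forall>j\<in>{-N..N}. rL < r' j \<and> r' j < rU) \<and> gfc_step eta N K f r r'"
proof -
  define Ph where "Ph j = - (\<Sum>i=-N..j. f i)" for j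
  define c where "c j = Ph j - Gc r j" for j
  interpret J: qcj eta rL rU m a N K c
  proof unfold_locales
    fix j p q assume h: "-N \<le> j" "j \<le> N" "rL \<le> p" "p \<le> rU" "rL \<le> q" "q \<le> rU"
    have P: "eta rL + 4 * eta (2 * rL) - 2 * eta (2 * rU) < Ph j" "Ph j < eta rU + 4 * eta (2 * rU) - 2 * eta (2 * rL)"
      using Pb[OF h(1,2)] unfolding Ph_def by auto
    show "row j p q rL < c j \<and> c j < row j p q rU"
      unfolding c_def by (rule cbounds[OF s b h P])
  qed
  obtain x where xb: "box x" and xs: "\<forall>j\<in>{-N..N}. rL < x j \<and> x j < rU"
    and xp: "\<forall>j\<in>{-N..N}. psiE eta N K x j = c j"
    using J.jacobi by blast
  have Phs: "Ph (-j) = Ph j" if "-N \<le> j" "j \<le> N" for j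
    using Phi_sym[OF fa that] unfolding Ph_def by simp
  have xtb: "box (\<lambda>i. x (-i))" using xb unfolding box_def by auto
  have xe: "x j = x (-j)" if j: "-N \<le> j" "j \<le> N" for j
  proof -
    have "x j = (\<lambda>i. x (-i)) j"
    proof (rule uniq[OF xb xtb _ j])
      fix i assume i: "-N \<le> i" "i \<le> N"
      have i': "-N \<le> -i" "-i \<le> N" using i by auto
      have 1: "psiE eta N K (\<lambda>i. x (-i)) i = psiE eta N K x (-i)" by (rule reflect[OF i])
      have 2: "psiE eta N K x (-i) = c (-i)" using xp i' by auto
      have 3: "c (-i) = c i" unfolding c_def using Phs[OF i] Gc_sym[of r i] by simp
      have 4: "psiE eta N K x i = c i" using xp i by auto
      show "psiE eta N K x i = psiE eta N K (\<lambda>i. x (-i)) i" using 1 2 3 4 by simp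
    qed
    then show ?thesis by simp
  qed
  have sx: "symmetric_vec N x" unfolding symmetric_vec_def
  proof
    fix j assume "j \<in> {1..N}"
    then show "x (-j) = x j" using xe[of j] by auto
  qed
  define Q where "Q j = Ph j - SFc r j + psiE eta N K r j" for j
  have NN0: "0 \<le> N" using K2 KN by simp
  have xQ: "psiE eta N K x j = Q j" if j: "-N - 1 \<le> j" "j \<le> N + 1" for j
  proof -
    consider "j = -N-1" | "-N \<le> j \<and> j \<le> N" | "j = N+1" using j by linarith
    then show ?thesis
    proof cases
      case 1 then show ?thesis by (simp add: Q_def Ph_def psiE_out SFc_def)
    next
      case 2 then show ?thesis using xp Gform[OF s, of j] by (simp add: Q_def c_def)
    next
      case 3
      have "SFc r (N+1) = Aterm r + Bterm r" using K2 KN by (simp add: SFc_def)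
      then show ?thesis using 3 sym_AB[OF s] Phi_total[OF fa NN0] by (simp add: Q_def Ph_def psiE_out)
    qed
  qed
  have step: "gfc_step eta N K f r x"
    unfolding gfc_step_def
  proof
    fix j assume j: "j \<in> {-N..N+1}"
    have fP: "Ph j = Ph (j-1) - f j" unfolding Ph_def using sum_last[of "-N" j f] j by simp
    have e1: "psiE eta N K x j = Q j" using xQ j by auto
    have e2: "psiE eta N K x (j-1) = Q (j-1)" using xQ j by auto
    have e3: "FQCF eta N K r j = SFc r j - SFc r (j-1)" using FQCF_tele j by auto
    have "FQCE eta N K x j + FG eta N K r j + f j = (Q j - Q (j-1))
        + ((SFc r j - SFc r (j-1)) - (psiE eta N K r j - psiE eta N K r (j-1))) + f j"
      unfolding FG_def FQCE_def e1 e2 e3 by (rule refl)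
    also have "\<dots> = 0" unfolding Q_def using fP by linarith
    finally show "FQCE eta N K x j + FG eta N K r j + f j = 0" .
  qed
  show ?thesis using sx xs step by blast
qed

lemma step_psi:
  fixes f :: "int \<Rightarrow> real"
  assumes st: "gfc_step eta N K f r r'" and j: "-N \<le> j" "j \<le> N"
  shows "psiE eta N K r' j = - (\<Sum>i=-N..j. f i) - (SFc r j - psiE eta N K r j)"
proof -
  have "(\<Sum>i=-N..j. FQCE eta N K r' i + FG eta N K r i + f i) = 0"
    using st j unfolding gfc_step_def by (intro sum.neutral) auto
  moreover have "(\<Sum>i=-N..j. FQCE eta N K r' i + FG eta N K r i + f i)
     = (\<Sum>i=-N..j. FQCE eta N K r' i) + ((\<Sum>i=-N..j. FQCF eta N K r i) - (\<Sum>i=-N..j. FQCE eta N K r i)) + (\<Sum>i=-N..j. f i)"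
    by (simp add: sum.distrib sum_subtractf FG_def)
  ultimately show ?thesis using sum_FQCE[of j r'] sum_FQCE[of j r] sum_FQCF[of j r] j by simp
qed

lemma Gc_lip:
  assumes b: "box r" "box s" and j: "-N \<le> j" "j \<le> N"
  shows "\<bar>Gc r j - Gc s j\<bar> \<le> 8 * a * sup_dist N r s"
proof -
  let ?S = "sup_dist N r s"
  have cf: "0 \<le> la1 j" "0 \<le> la2 j" "0 \<le> la3 j" "la1 j + la2 j + la3 j \<le> 4" using coef[OF j] by auto
  have KI: "-N \<le> -K-1" "-K+1 \<le> N" using K2 KN by auto
  have rb: "rL \<le> r (-K-1)" "r (-K-1) \<le> rU" "rL \<le> r (-K)" "r (-K) \<le> rU" "rL \<le> r (-K+1)" "r (-K+1) \<le> rU"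
    "rL \<le> s (-K-1)" "s (-K-1) \<le> rU" "rL \<le> s (-K)" "s (-K) \<le> rU" "rL \<le> s (-K+1)" "s (-K+1) \<le> rU"
    using boxD[OF b(1)] boxD[OF b(2)] KI K2 by auto
  have d: "\<bar>r (-K-1) - s (-K-1)\<bar> \<le> ?S" "\<bar>r (-K) - s (-K)\<bar> \<le> ?S" "\<bar>r (-K+1) - s (-K+1)\<bar> \<le> ?S"
    using sd_ge KI K2 by auto
  have l1: "\<bar>eta (2 * r (-K)) - eta (2 * s (-K))\<bar> \<le> 2 * a * ?S"
  proof -
    have "\<bar>eta (2 * r (-K)) - eta (2 * s (-K))\<bar> \<le> a * \<bar>2 * r (-K) - 2 * s (-K)\<bar>"
      using E2abs[of "2 * s (-K)" "2 * r (-K)"] rb by auto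
    also have "\<dots> \<le> a * (2 * ?S)" using d(2) a0 by (intro mult_left_mono) auto
    finally show ?thesis by simp
  qed
  have l2: "\<bar>eta (r (-K-1) + r (-K)) - eta (s (-K-1) + s (-K))\<bar> \<le> 2 * a * ?S"
  proof -
    have "\<bar>eta (r (-K-1) + r (-K)) - eta (s (-K-1) + s (-K))\<bar> \<le> a * \<bar>(r (-K-1) + r (-K)) - (s (-K-1) + s (-K))\<bar>"
      using E2abs[of "s (-K-1) + s (-K)" "r (-K-1) + r (-K)"] rb by auto
    also have "\<dots> \<le> a * (2 * ?S)" using d(1,2) a0 by (intro mult_left_mono) auto
    finally show ?thesis by simp
  qed
  have l3: "\<bar>eta (r (-K) + r (-K+1)) - eta (s (-K) + s (-K+1))\<bar> \<le> 2 * a * ?S"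
  proof -
    have "\<bar>eta (r (-K) + r (-K+1)) - eta (s (-K) + s (-K+1))\<bar> \<le> a * \<bar>(r (-K) + r (-K+1)) - (s (-K) + s (-K+1))\<bar>"
      using E2abs[of "s (-K) + s (-K+1)" "r (-K) + r (-K+1)"] rb by auto
    also have "\<dots> \<le> a * (2 * ?S)" using d(2,3) a0 by (intro mult_left_mono) auto
    finally show ?thesis by simp
  qed
  have "\<bar>Gc r j - Gc s j\<bar> = \<bar>la3 j * (eta (2 * r (-K)) - eta (2 * s (-K)))
      - la1 j * (eta (r (-K-1) + r (-K)) - eta (s (-K-1) + s (-K)))
      - la2 j * (eta (r (-K) + r (-K+1)) - eta (s (-K) + s (-K+1)))\<bar>"
    unfolding Gc_def by (simp add: algebra_simps)
  also have "\<dots> \<le> la3 j * \<bar>eta (2 * r (-K)) - eta (2 * s (-K))\<bar>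
      + la1 j * \<bar>eta (r (-K-1) + r (-K)) - eta (s (-K-1) + s (-K))\<bar>
      + la2 j * \<bar>eta (r (-K) + r (-K+1)) - eta (s (-K) + s (-K+1))\<bar>"
  proof -
    have e: "\<bar>la3 j * X\<bar> = la3 j * \<bar>X\<bar>" "\<bar>la1 j * Y\<bar> = la1 j * \<bar>Y\<bar>" "\<bar>la2 j * Z\<bar> = la2 j * \<bar>Z\<bar>" for X Y Z
      using cf by (simp_all add: abs_mult)
    have t: "\<bar>X - Y - Z\<bar> \<le> \<bar>X\<bar> + \<bar>Y\<bar> + \<bar>Z\<bar>" for X Y Z :: real by linarith
    show ?thesis by (rule order_trans[OF t]) (simp only: e order_refl)
  qed
  also have "\<dots> \<le> la3 j * (2 * a * ?S) + la1 j * (2 * a * ?S) + la2 j * (2 * a * ?S)"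
    using mult_left_mono[OF l1 cf(3)] mult_left_mono[OF l2 cf(1)] mult_left_mono[OF l3 cf(2)] by linarith
  also have "\<dots> = (la1 j + la2 j + la3 j) * (2 * a * ?S)" by (simp add: algebra_simps)
  also have "\<dots> \<le> 4 * (2 * a * ?S)"
    using cf(4) a0 sd_nonneg[OF NN, of r s] by (intro mult_right_mono) auto
  finally show ?thesis by simp
qed

lemma contraction:
  fixes f :: "int \<Rightarrow> real"
  assumes "symmetric_vec N r" "box r" "symmetric_vec N s" "box s" "box r'" "box s'"
    and "gfc_step eta N K f r r'" "gfc_step eta N K f s s'"
  shows "(m - 5 * a) * sup_dist N r' s' \<le> 8 * a * sup_dist N r s"
proof (rule ctr[OF assms(5,6)])
  fix j assume j: "-N \<le> j" "j \<le> N"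
  have "psiE eta N K r' j - psiE eta N K s' j = Gc s j - Gc r j"
    using step_psi[OF assms(7) j] step_psi[OF assms(8) j] Gform[OF assms(1) j] Gform[OF assms(3) j] by simp
  then show "\<bar>psiE eta N K r' j - psiE eta N K s' j\<bar> \<le> 8 * a * sup_dist N r s"
    using Gc_lip[OF assms(2,4) j] by (simp add: abs_minus_commute)
qed

end


lemma geo_conv:
  fixes X :: "nat \<Rightarrow> int \<Rightarrow> real"
  assumes q: "0 \<le> q" "q < 1" and g: "\<And>n. sup_dist N (X (Suc n)) (X n) \<le> q^n * D" and j: "j \<in> {-N..N}"
  shows "(\<lambda>n. X n j) \<longlonglongrightarrow> lim (\<lambda>n. X n j)"
proof -
  have "summable (\<lambda>n. X (Suc n) j - X n j)"
  proof (rule summable_comparison_test)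
    show "\<exists>N0. \<forall>n\<ge>N0. norm (X (Suc n) j - X n j) \<le> q ^ n * D"
    proof (intro exI allI impI)
      fix n :: nat
      have "\<bar>X (Suc n) j - X n j\<bar> \<le> sup_dist N (X (Suc n)) (X n)" by (rule sd_ge[OF j])
      then show "norm (X (Suc n) j - X n j) \<le> q ^ n * D" using g[of n] by simp
    qed
    show "summable (\<lambda>n. q ^ n * D)" using q by (intro summable_mult2 summable_geometric) simp
  qed
  then have "(\<lambda>n. \<Sum>i<n. X (Suc i) j - X i j) \<longlonglongrightarrow> suminf (\<lambda>n. X (Suc n) j - X n j)"
    by (rule summable_LIMSEQ)
  then have "(\<lambda>n. X 0 j + (\<Sum>i<n. X (Suc i) j - X i j)) \<longlonglongrightarrow> X 0 j + suminf (\<lambda>n. X (Suc n) j - X n j)"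
    by (intro tendsto_intros)
  then have "convergent (\<lambda>n. X n j)" by (auto simp: sum_lessThan_telescope[where f="\<lambda>i. X i j"] convergent_def)
  then show ?thesis by (simp add: convergent_LIMSEQ_iff)
qed

lemma sum_abs_tendsto:
  fixes X :: "nat \<Rightarrow> int \<Rightarrow> real"
  assumes "\<And>j. j \<in> {-N..N} \<Longrightarrow> (\<lambda>n. X n j) \<longlonglongrightarrow> x j"
  shows "(\<lambda>n. \<Sum>i\<in>{-N..N}. \<bar>x i - X n i\<bar>) \<longlonglongrightarrow> 0"
proof -
  have "(\<lambda>n. \<Sum>i\<in>{-N..N}. \<bar>x i - X n i\<bar>) \<longlonglongrightarrow> (\<Sum>i\<in>{-N..N}. 0)"
  proof (rule tendsto_sum)
    fix i assume i: "i \<in> {-N..N}"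
    have "(\<lambda>n. x i - X n i) \<longlonglongrightarrow> x i - x i" by (intro tendsto_intros assms[OF i])
    then show "(\<lambda>n. \<bar>x i - X n i\<bar>) \<longlonglongrightarrow> 0" using tendsto_rabs_zero by fastforce
  qed
  then show ?thesis by simp
qed

context qc begin

lemma psiE_outside: "j < -N \<or> N < j \<Longrightarrow> psiE eta N K x j = 0"
  using K2 KN by (auto simp: psiE_def)

lemma psiE_cong:
  assumes "\<And>i. -N \<le> i \<Longrightarrow> i \<le> N \<Longrightarrow> x i = y i"
  shows "psiE eta N K x j = psiE eta N K y j"
proof (cases "-N \<le> j \<and> j \<le> N")
  case True
  then show ?thesis using form[of j x] form[of j y] nb_in[of j] assms by auto
next
  case False
  then show ?thesis using psiE_outside by auto
qed

lemma sd_self: "sup_dist N x x = 0"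
  using sd_le[OF NN, of x x 0] sd_nonneg[OF NN, of x x] by simp

end

theorem corollary5p2:
  fixes phi eta eta1 eta2 :: "real \<Rightarrow> real"
    and a0 a1 rt1 rt2 rL rU :: real
    and N K :: int
    and f :: "int \<Rightarrow> real"
  assumes phi_deriv: "\<And>x. x > 0 \<Longrightarrow> (phi has_real_derivative eta x) (at x)"
    and eta_deriv: "\<And>x. x > 0 \<Longrightarrow> (eta has_real_derivative eta1 x) (at x)"
    and eta1_deriv: "\<And>x. x > 0 \<Longrightarrow> (eta1 has_real_derivative eta2 x) (at x)"
    and eta2_cont: "continuous_on {0<..} eta2"
    and cst: "0 < a0" "a0 < rt1" "rt1 < rt2" "rt2 < 2 * a0" "a1 > a0"
    and eta1_pos: "\<And>r. 0 < r \<Longrightarrow> r < rt1 \<Longrightarrow> eta1 r > 0"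
    and eta1_neg: "\<And>r. r > rt1 \<Longrightarrow> eta1 r < 0"
    and eta2_neg: "\<And>r. 0 < r \<Longrightarrow> r < rt2 \<Longrightarrow> eta2 r < 0"
    and eta2_pos: "\<And>r. r > rt2 \<Longrightarrow> eta2 r > 0"
    and hat_neg: "\<And>r. 0 < r \<Longrightarrow> r < a0 \<Longrightarrow> eta_hat eta r < 0"
    and hat_pos: "\<And>r. r > a0 \<Longrightarrow> eta_hat eta r > 0"
    and hatd_pos: "\<And>r. 0 < r \<Longrightarrow> r < a1 \<Longrightarrow> eta1 r + 4 * eta1 (2 * r) > 0"
    and hatd_neg: "\<And>r. r > a1 \<Longrightarrow> eta1 r + 4 * eta1 (2 * r) < 0"
    and K_ge: "K \<ge> 2" and K_lt: "K < N - 1"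
    and f_anti: "\<And>j. 0 \<le> j \<Longrightarrow> j \<le> N \<Longrightarrow> f (j + 1) = - f (-j)"
    and rL_gt: "rt2 / 2 < rL" and rL_rU: "rL < rU"
    and eta1_cond: "eta1 rU + 13 * eta1 (2 * rL) > 0"
    and Phi_bounds: "\<And>j. -N \<le> j \<Longrightarrow> j \<le> N \<Longrightarrow>
        eta rL + 4 * eta (2 * rL) - 2 * eta (2 * rU) < - (\<Sum>i=-N..j. f i) \<and>
        - (\<Sum>i=-N..j. f i) < eta rU + 4 * eta (2 * rU) - 2 * eta (2 * rL)"
  shows
    "(\<forall>r. symmetric_vec N r \<and> in_Omega rL rU N r \<longrightarrow>
        (\<exists>r'. symmetric_vec N r' \<and> in_Omega rL rU N r' \<and> gfc_step eta N K f r r') \<and>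
        (\<forall>r' r''. symmetric_vec N r' \<and> in_Omega rL rU N r' \<and> gfc_step eta N K f r r' \<and>
                  symmetric_vec N r'' \<and> in_Omega rL rU N r'' \<and> gfc_step eta N K f r r''
                  \<longrightarrow> (\<forall>j\<in>{-N..N}. r' j = r'' j)))
     \<and> 8 * \<bar>eta1 (2 * rL)\<bar> / (eta1 rU - 5 * \<bar>eta1 (2 * rL)\<bar>) < 1
     \<and> (\<forall>r s r' s'. symmetric_vec N r \<and> in_Omega rL rU N r \<and>
                    symmetric_vec N s \<and> in_Omega rL rU N s \<and>
                    symmetric_vec N r' \<and> in_Omega rL rU N r' \<and> gfc_step eta N K f r r' \<and>
                    symmetric_vec N s' \<and> in_Omega rL rU N s' \<and> gfc_step eta N K f s s' \<longrightarrow>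
          sup_dist N r' s' \<le>
            8 * \<bar>eta1 (2 * rL)\<bar> / (eta1 rU - 5 * \<bar>eta1 (2 * rL)\<bar>) * sup_dist N r s)
     \<and> (\<forall>R :: nat \<Rightarrow> int \<Rightarrow> real.
          (\<forall>n. symmetric_vec N (R n) \<and> in_Omega rL rU N (R n)) \<and>
          (\<forall>n. gfc_step eta N K f (R n) (R (Suc n))) \<longrightarrow>
          (\<exists>r. symmetric_vec N r \<and> in_Omega rL rU N r \<and> qcf_eq eta N K f r \<and>
               (\<forall>j\<in>{-N..N}. (\<lambda>n. R n j) \<longlonglongrightarrow> r j) \<and>
               (\<forall>s. symmetric_vec N s \<and> in_Omega rL rU N s \<and> qcf_eq eta N K f s
                    \<longrightarrow> (\<forall>j\<in>{-N..N}. s j = r j))))"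
  
proof -
  define a where "a = - eta1 (2 * rL)"
  define m where "m = eta1 rU"
  have rt2p: "0 < rt2" using cst by simp
  have rL0: "0 < rL" using rL_gt rt2p by simp
  have e1n: "eta1 (2 * rL) < 0" using eta1_neg rL_gt cst by simp
  have a0: "0 < a" using e1n a_def by simp
  have abs_a: "\<bar>eta1 (2 * rL)\<bar> = a" using e1n a_def by simp
  have ma: "13 * a < m" using eta1_cond a_def m_def by simp
  have rUt: "rU \<le> rt1"
  proof (rule ccontr)
    assume "\<not> rU \<le> rt1"
    then have "eta1 rU < 0" using eta1_neg by simp
    then show False using ma a0 m_def by simp
  qed
  have E1: "m * (y' - y) \<le> eta y' - eta y" if y: "rL \<le> y" "y \<le> y'" "y' \<le> rU" for y y'
  proof (cases "y = y'")
    case True then show ?thesis by simp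
  next
    case False
    then have yy: "y < y'" using y by simp
    obtain z where z: "y < z" "z < y'" "eta y' - eta y = (y' - y) * eta1 z"
      using MVT2[OF yy, of eta eta1] eta_deriv y rL0 by force
    have "m \<le> eta1 z"
    proof -
      have zr: "z < rU" using z y by simp
      obtain w where w: "z < w" "w < rU" "eta1 rU - eta1 z = (rU - z) * eta2 w"
        using MVT2[OF zr, of eta1 eta2] eta1_deriv z y rL0 by force
      have "eta2 w < 0" using eta2_neg[of w] w z y rL0 rUt cst by simp
      then have "(rU - z) * eta2 w \<le> 0" using w by (simp add: mult_nonneg_nonpos)
      then show ?thesis using w m_def by simp
    qed
    then have "(y' - y) * m \<le> (y' - y) * eta1 z" using yy by (intro mult_left_mono) auto
    then show ?thesis using z by (simp add: mult.commute)
  qed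
  have E2: "- (a * (t - s)) \<le> eta t - eta s \<and> eta t - eta s \<le> 0"
    if st: "2 * rL \<le> s" "s \<le> t" "t \<le> 2 * rU" for s t
  proof (cases "s = t")
    case True then show ?thesis by simp
  next
    case False
    then have ss: "s < t" using st by simp
    obtain z where z: "s < z" "z < t" "eta t - eta s = (t - s) * eta1 z"
      using MVT2[OF ss, of eta eta1] eta_deriv st rL0 by force
    have zn: "eta1 z < 0" using eta1_neg z st rL_gt cst by simp
    have zl: "- a \<le> eta1 z"
    proof -
      have zr: "2 * rL < z" using z st by simp
      obtain w where w: "2 * rL < w" "w < z" "eta1 z - eta1 (2 * rL) = (z - 2 * rL) * eta2 w"
        using MVT2[OF zr, of eta1 eta2] eta1_deriv rL0 by force
      have "eta2 w > 0" using eta2_pos[of w] w rL_gt by simp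
      then have "0 \<le> (z - 2 * rL) * eta2 w" using w by simp
      then show ?thesis using w a_def by simp
    qed
    have "(t - s) * (- a) \<le> (t - s) * eta1 z" using zl ss by (intro mult_left_mono) auto
    moreover have "(t - s) * eta1 z \<le> 0" using zn ss by (simp add: mult_nonneg_nonpos)
    ultimately show ?thesis using z by (simp add: algebra_simps)
  qed
  have cont: "isCont eta x" if "0 < x" for x using eta_deriv[OF that] by (rule DERIV_isCont)
  interpret Q: qc eta rL rU m a N K
    by unfold_locales (use K_ge K_lt rL0 rL_rU a0 ma E1 E2 cont in auto)
  have m5: "0 < m - 5 * a" using a0 ma by simp
  let ?L = "8 * \<bar>eta1 (2 * rL)\<bar> / (eta1 rU - 5 * \<bar>eta1 (2 * rL)\<bar>)"
  have L: "?L = 8 * a / (m - 5 * a)" using abs_a m_def by simp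
  have L0: "0 \<le> 8 * a / (m - 5 * a)" using a0 m5 by simp
  have L1: "8 * a / (m - 5 * a) < 1" using a0 ma m5 by (simp add: divide_simps)
  have OB: "Q.box x" if "in_Omega rL rU N x" for x
    using that unfolding in_Omega_def Q.box_def by (auto simp: less_imp_le)
  have ctr: "sup_dist N r' s' \<le> 8 * a / (m - 5 * a) * sup_dist N r s"
    if "symmetric_vec N r" "Q.box r" "symmetric_vec N s" "Q.box s" "Q.box r'" "Q.box s'"
      "gfc_step eta N K f r r'" "gfc_step eta N K f s s'" for r s r' s'
  proof -
    have "(m - 5 * a) * sup_dist N r' s' \<le> 8 * a * sup_dist N r s"
      by (rule Q.contraction[OF that])
    then show ?thesis using m5 by (simp add: field_simps)
  qed
  have P1: "\<forall>r. symmetric_vec N r \<and> in_Omega rL rU N r \<longrightarrow>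
        (\<exists>r'. symmetric_vec N r' \<and> in_Omega rL rU N r' \<and> gfc_step eta N K f r r') \<and>
        (\<forall>r' r''. symmetric_vec N r' \<and> in_Omega rL rU N r' \<and> gfc_step eta N K f r r' \<and>
                  symmetric_vec N r'' \<and> in_Omega rL rU N r'' \<and> gfc_step eta N K f r r''
                  \<longrightarrow> (\<forall>j\<in>{-N..N}. r' j = r'' j))"
  proof (intro allI impI conjI ballI)
    fix r assume r: "symmetric_vec N r \<and> in_Omega rL rU N r"
    show "\<exists>r'. symmetric_vec N r' \<and> in_Omega rL rU N r' \<and> gfc_step eta N K f r r'"
      using Q.existence[of r f, OF _ OB f_anti Phi_bounds] r unfolding in_Omega_def by auto
  next
      fix r r' r'' j assume r: "symmetric_vec N r \<and> in_Omega rL rU N r"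
        and h: "symmetric_vec N r' \<and> in_Omega rL rU N r' \<and> gfc_step eta N K f r r' \<and>
                  symmetric_vec N r'' \<and> in_Omega rL rU N r'' \<and> gfc_step eta N K f r r''"
        and j: "j \<in> {-N..N}"
      have "sup_dist N r' r'' \<le> 8 * a / (m - 5 * a) * sup_dist N r r"
        using ctr[of r r r' r''] h r OB by blast
      then have "sup_dist N r' r'' \<le> 0" using Q.sd_self by simp
      then show "r' j = r'' j" using sd_ge[OF j, of r' r''] by simp
  qed
  have P3: "\<forall>r s r' s'. symmetric_vec N r \<and> in_Omega rL rU N r \<and>
                    symmetric_vec N s \<and> in_Omega rL rU N s \<and>
                    symmetric_vec N r' \<and> in_Omega rL rU N r' \<and> gfc_step eta N K f r r' \<and>
                    symmetric_vec N s' \<and> in_Omega rL rU N s' \<and> gfc_step eta N K f s s' \<longrightarrow>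
          sup_dist N r' s' \<le> ?L * sup_dist N r s"
    unfolding L using ctr OB by blast
  have P4: "\<forall>R :: nat \<Rightarrow> int \<Rightarrow> real.
          (\<forall>n. symmetric_vec N (R n) \<and> in_Omega rL rU N (R n)) \<and>
          (\<forall>n. gfc_step eta N K f (R n) (R (Suc n))) \<longrightarrow>
          (\<exists>r. symmetric_vec N r \<and> in_Omega rL rU N r \<and> qcf_eq eta N K f r \<and>
               (\<forall>j\<in>{-N..N}. (\<lambda>n. R n j) \<longlonglongrightarrow> r j) \<and>
               (\<forall>s. symmetric_vec N s \<and> in_Omega rL rU N s \<and> qcf_eq eta N K f s
                    \<longrightarrow> (\<forall>j\<in>{-N..N}. s j = r j)))"
  proof (intro allI impI)
    fix R :: "nat \<Rightarrow> int \<Rightarrow> real"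
    assume hR: "(\<forall>n. symmetric_vec N (R n) \<and> in_Omega rL rU N (R n)) \<and>
          (\<forall>n. gfc_step eta N K f (R n) (R (Suc n)))"
    have Rs: "symmetric_vec N (R n)" "Q.box (R n)" "gfc_step eta N K f (R n) (R (Suc n))" for n
      using hR OB by auto
    define q where "q = 8 * a / (m - 5 * a)"
    define D where "D = sup_dist N (R 1) (R 0)"
    have geo: "sup_dist N (R (Suc n)) (R n) \<le> q ^ n * D" for n
    proof (induction n)
      case 0 then show ?case by (simp add: D_def)
    next
      case (Suc n)
      have "sup_dist N (R (Suc (Suc n))) (R (Suc n)) \<le> q * sup_dist N (R (Suc n)) (R n)"
        unfolding q_def by (rule ctr[OF Rs(1,2) Rs(1,2) Rs(2) Rs(2) Rs(3) Rs(3)])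
      also have "\<dots> \<le> q * (q ^ n * D)" using Suc L0 q_def by (intro mult_left_mono) auto
      finally show ?case by simp
    qed
    define xs where "xs j = lim (\<lambda>n. R n j)" for j
    have xl: "(\<lambda>n. R n j) \<longlonglongrightarrow> xs j" if "j \<in> {-N..N}" for j
      unfolding xs_def using geo_conv[of q N R D j] L0 L1 geo that q_def by auto
    have xb: "Q.box xs" unfolding Q.box_def
    proof
      fix j assume j: "j \<in> {-N..N}"
      show "rL \<le> xs j \<and> xs j \<le> rU"
        using LIMSEQ_le_const[OF xl[OF j], of rL] LIMSEQ_le_const2[OF xl[OF j], of rU] Q.boxD[OF Rs(2)] j by auto
    qed
    have xsym: "symmetric_vec N xs" unfolding symmetric_vec_def
    proof
      fix j assume j: "j \<in> {1..N}"
      have j1: "j \<in> {-N..N}" "-j \<in> {-N..N}" using j by auto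
      have "R n (-j) = R n j" for n using Rs(1)[of n] j unfolding symmetric_vec_def by auto
      then have "(\<lambda>n. R n j) \<longlonglongrightarrow> xs (-j)" using xl[OF j1(2)] by simp
      then show "xs (-j) = xs j" using xl[OF j1(1)] LIMSEQ_unique by blast
    qed
    obtain r' where r': "symmetric_vec N r'" "\<forall>j\<in>{-N..N}. rL < r' j \<and> r' j < rU" "gfc_step eta N K f xs r'"
      using Q.existence[OF xsym xb f_anti Phi_bounds] by blast
    have r'b: "Q.box r'" using r'(2) unfolding Q.box_def by (auto simp: less_imp_le)
    have eq: "xs j = r' j" if j: "j \<in> {-N..N}" for j
    proof -
      have bd: "\<bar>R (Suc n) j - r' j\<bar> \<le> q * (\<Sum>i\<in>{-N..N}. \<bar>xs i - R n i\<bar>)" for n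
      proof -
        have "\<bar>R (Suc n) j - r' j\<bar> \<le> sup_dist N (R (Suc n)) r'" using sd_ge[OF j] .
        also have "\<dots> \<le> q * sup_dist N (R n) xs"
          unfolding q_def by (rule ctr[OF Rs(1,2) xsym xb Rs(2) r'b Rs(3) r'(3)])
        also have "sup_dist N (R n) xs \<le> (\<Sum>i\<in>{-N..N}. \<bar>xs i - R n i\<bar>)"
          using sd_sum[OF Q.NN, of "R n" xs] by (simp add: abs_minus_commute)
        then have "q * sup_dist N (R n) xs \<le> q * (\<Sum>i\<in>{-N..N}. \<bar>xs i - R n i\<bar>)"
          using L0 q_def by (intro mult_left_mono) auto
        finally show ?thesis .
      qed
      have t1: "(\<lambda>n. q * (\<Sum>i\<in>{-N..N}. \<bar>xs i - R n i\<bar>)) \<longlonglongrightarrow> 0"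
        using tendsto_mult_right_zero[OF sum_abs_tendsto[of N R xs]] xl by auto
      have "(\<lambda>n. \<bar>R (Suc n) j - r' j\<bar>) \<longlonglongrightarrow> 0"
        by (rule tendsto_sandwich[OF _ _ tendsto_const t1]) (use bd in auto)
      then have "(\<lambda>n. R (Suc n) j - r' j) \<longlonglongrightarrow> 0" by (rule tendsto_rabs_zero_cancel)
      then have "(\<lambda>n. R (Suc n) j) \<longlonglongrightarrow> r' j" by (rule LIM_zero_cancel)
      moreover have "(\<lambda>n. R (Suc n) j) \<longlonglongrightarrow> xs j" using LIMSEQ_Suc[OF xl[OF j]] .
      ultimately show ?thesis using LIMSEQ_unique by metis
    qed
    have xO: "in_Omega rL rU N xs" unfolding in_Omega_def using r'(2) eq by auto
    have FQ: "FQCE eta N K r' j = FQCE eta N K xs j" for j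
      unfolding FQCE_def using Q.psiE_cong[of r' xs] eq by auto
    have xq: "qcf_eq eta N K f xs"
      unfolding qcf_eq_def
    proof
      fix j assume j: "j \<in> {-N..N+1}"
      have "FQCE eta N K r' j + FG eta N K xs j + f j = 0" using r'(3) j unfolding gfc_step_def by auto
      then show "FQCF eta N K xs j + f j = 0" unfolding FG_def FQ by simp
    qed
    have selfstep: "gfc_step eta N K f s s" if "qcf_eq eta N K f s" for s
      using that unfolding qcf_eq_def gfc_step_def FG_def by auto
    show "\<exists>r. symmetric_vec N r \<and> in_Omega rL rU N r \<and> qcf_eq eta N K f r \<and>
               (\<forall>j\<in>{-N..N}. (\<lambda>n. R n j) \<longlonglongrightarrow> r j) \<and>
               (\<forall>s. symmetric_vec N s \<and> in_Omega rL rU N s \<and> qcf_eq eta N K f s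
                    \<longrightarrow> (\<forall>j\<in>{-N..N}. s j = r j))"
    proof (intro exI conjI allI impI ballI)
      show "symmetric_vec N xs" "in_Omega rL rU N xs" "qcf_eq eta N K f xs" by (fact xsym, fact xO, fact xq)
      show "(\<lambda>n. R n j) \<longlonglongrightarrow> xs j" if "j \<in> {-N..N}" for j using xl[OF that] .
    next
      fix s j assume hs: "symmetric_vec N s \<and> in_Omega rL rU N s \<and> qcf_eq eta N K f s" and j: "j \<in> {-N..N}"
      have sb: "Q.box s" using hs OB by blast
      have "sup_dist N s xs \<le> q * sup_dist N s xs"
        unfolding q_def by (rule ctr[OF _ sb xsym xb sb xb selfstep selfstep]) (use hs xq in auto)
      then have "(1 - q) * sup_dist N s xs \<le> 0" by (simp add: algebra_simps)
      moreover have "0 < 1 - q" using L1 q_def by simp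
      ultimately have "sup_dist N s xs \<le> 0" by (simp add: mult_le_0_iff)
      then show "s j = xs j" using sd_ge[OF j, of s xs] by simp
    qed
  qed
  have P2: "?L < 1" using L L1 by simp
  show ?thesis using P1 P2 P3 P4 by blast
qed

end
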